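(* Let $M$ be a system execution satisfying the Lazy Set axioms A0, A1, A2, and let $\Rightarrow$ be the relation defined in the context. Then the relation $<'\;=\;(<\cup\Rightarrow)$ (i.e. $a<'b$ iff $a<b$ or $a\Rightarrow b$) contains no cycles: there is no sequence of events $X_0<'X_1<'\cdots<'X_n$ with $n\ge1$ and $X_0=X_n$.
   Context: A system execution $M$ consists of: a set of events, partitioned into low-level events (actions) and high-level events; unary predicates $\mathrm{Add},\mathrm{Rem},\mathrm{Cnt}$ on events; a partial order $<$ on events in which every event has finitely many predecessors (and Lamport's finiteness property: for every event $x$ there is a finite set $E$ with $x<y$ for all events $y\notin E$); functions $\mathrm{Begin},\mathrm{End}$ from events to actions with $\mathrm{Begin}(e)=\mathrm{End}(e)=e$ for actions $e$; functions $\chi$ (events $\to\{0,1,f\}$), $\mathrm{val}$ (events $\to\mathbb N$), $\gamma$ (events $\to$ events). For events $X,Y$, $X<Y$ iff $\mathrm{End}(X)<\mathrm{Begin}(Y)$. Notation: $\mathrm{Add}^p(a)$ abbreviates $\mathrm{Add}(a)\wedge\chi(a)=p$, similarly $\mathrm{Rem}^p,\mathrm{Cnt}^p$; $\mathrm{Op}^p(a)$ abbreviates $(\mathrm{Add}(a)\vee\mathrm{Rem}(a)\vee\mathrm{Cnt}(a))\wedge\chi(a)=p$ for $p\in\{0,1\}$. A0: $\mathrm{Add},\mathrm{Rem},\mathrm{Cnt}$ pairwise disjoint; $\mathrm{Add},\mathrm{Rem}$ events are actions, $\mathrm{Cnt}$ events are high-level; $\mathrm{Begin}(X),\mathrm{End}(X)$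 are actions; for $\mathrm{Cnt}$ events $E$, $\mathrm{Begin}(E)<\mathrm{End}(E)$; $<$ restricted to actions is linear. A1: for every $A$ with $\mathrm{Op}^1(A)$: $\mathrm{Add}^0(\gamma(A))$, $\mathrm{val}(\gamma(A))=\mathrm{val}(A)$, $\gamma(A)<\mathrm{End}(A)$, and no $R$ has $\mathrm{Rem}^1(R)$, $\gamma(R)=\gamma(A)$, $\gamma(A)<R<A$. A2: if $\mathrm{Op}^0(B)$, $\mathrm{Add}^0(A)$, $A<B$, $\mathrm{val}(A)=\mathrm{val}(B)$, then some $R$ has $\mathrm{Rem}^1(R)$, $A=\gamma(R)$, $R<\mathrm{End}(B)$. The relation $\Rightarrow$ on events holds exactly in the following cases: (1) for every $\mathrm{Cnt}^1$ event $C$: $\gamma(C)\Rightarrow C$, and $C\Rightarrow R$ for every $R$ with $\mathrm{Rem}^1(R)$ and $\gamma(R)=\gamma(C)$; (2) $R\Rightarrow C$ whenever $\mathrm{Cnt}^0(C)$, $\mathrm{Rem}^1(R)$, $\mathrm{val}(R)=\mathrm{val}(C)$, not $C<R$, and $\gamma(R)<C$; (3) $C\Rightarrow A$ whenever $\mathrm{Cnt}^0(C)$, $\mathrm{Add}^0(A)$, $\mathrm{val}(C)=\mathrm{val}(A)$ and not $A<C$. *)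

theory Defs
  imports Main
begin

datatype chival = X0 | X1 | Xf

text \<open>A (candidate) system execution. The set of events is the whole type 'e.
  act e means that e is a low-level event (action); all other events are high-level.\<close>
record 'e sysexec =
  act   :: "'e \<Rightarrow> bool"
  Add   :: "'e \<Rightarrow> bool"
  Rem   :: "'e \<Rightarrow> bool"
  Cnt   :: "'e \<Rightarrow> bool"
  prec  :: "'e \<Rightarrow> 'e \<Rightarrow> bool"
  Begin :: "'e \<Rightarrow> 'e"
  End   :: "'e \<Rightarrow> 'e"
  chi   :: "'e \<Rightarrow> chival"
  val   :: "'e \<Rightarrow> nat"
  gamma :: "'e \<Rightarrow> 'e"

definition system_execution :: "'e sysexec \<Rightarrow> bool" where
  "system_execution M \<longleftrightarrow>
     (\<forall>x. \<not> prec M x x) \<and>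
     (\<forall>x y z. prec M x y \<longrightarrow> prec M y z \<longrightarrow> prec M x z) \<and>
     (\<forall>x. finite {y. prec M y x}) \<and>
     (\<forall>x. \<exists>E. finite E \<and> (\<forall>y. y \<notin> E \<longrightarrow> prec M x y)) \<and>
     (\<forall>e. act M e \<longrightarrow> Begin M e = e \<and> End M e = e) \<and>
     (\<forall>X Y. prec M X Y \<longleftrightarrow> prec M (End M X) (Begin M Y))"

definition Add_p :: "'e sysexec \<Rightarrow> chival \<Rightarrow> 'e \<Rightarrow> bool" where
  "Add_p M p a \<longleftrightarrow> Add M a \<and> chi M a = p"
definition Rem_p :: "'e sysexec \<Rightarrow> chival \<Rightarrow> 'e \<Rightarrow> bool" where
  "Rem_p M p a \<longleftrightarrow> Rem M a \<and> chi M a = p"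
definition Cnt_p :: "'e sysexec \<Rightarrow> chival \<Rightarrow> 'e \<Rightarrow> bool" where
  "Cnt_p M p a \<longleftrightarrow> Cnt M a \<and> chi M a = p"
definition Op_p :: "'e sysexec \<Rightarrow> chival \<Rightarrow> 'e \<Rightarrow> bool" where
  "Op_p M p a \<longleftrightarrow> (Add M a \<or> Rem M a \<or> Cnt M a) \<and> chi M a = p"

definition A0 :: "'e sysexec \<Rightarrow> bool" where
  "A0 M \<longleftrightarrow>
     (\<forall>e. \<not> (Add M e \<and> Rem M e) \<and> \<not> (Add M e \<and> Cnt M e) \<and> \<not> (Rem M e \<and> Cnt M e)) \<and>
     (\<forall>e. Add M e \<longrightarrow> act M e) \<and>
     (\<forall>e. Rem M e \<longrightarrow> act M e) \<and>
     (\<forall>e. Cnt M e \<longrightarrow> \<not> act M e) \<and>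
     (\<forall>X. act M (Begin M X) \<and> act M (End M X)) \<and>
     (\<forall>E. Cnt M E \<longrightarrow> prec M (Begin M E) (End M E)) \<and>
     (\<forall>a b. act M a \<longrightarrow> act M b \<longrightarrow> a = b \<or> prec M a b \<or> prec M b a)"

definition A1 :: "'e sysexec \<Rightarrow> bool" where
  "A1 M \<longleftrightarrow>
     (\<forall>A. Op_p M X1 A \<longrightarrow>
        Add_p M X0 (gamma M A) \<and> val M (gamma M A) = val M A \<and>
        prec M (gamma M A) (End M A) \<and>
        \<not> (\<exists>R. Rem_p M X1 R \<and> gamma M R = gamma M A \<and>
                prec M (gamma M A) R \<and> prec M R A))"

definition A2 :: "'e sysexec \<Rightarrow> bool" where
  "A2 M \<longleftrightarrow>
     (\<forall>A B. Op_p M X0 B \<longrightarrow> Add_p M X0 A \<longrightarrow> prec M A B \<longrightarrow> val M A = val M B \<longrightarrow>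
        (\<exists>R. Rem_p M X1 R \<and> A = gamma M R \<and> prec M R (End M B)))"

definition arrow :: "'e sysexec \<Rightarrow> 'e \<Rightarrow> 'e \<Rightarrow> bool" where
  "arrow M a b \<longleftrightarrow>
     (Cnt_p M X1 b \<and> a = gamma M b) \<or>
     (Cnt_p M X1 a \<and> Rem_p M X1 b \<and> gamma M b = gamma M a) \<or>
     (Cnt_p M X0 b \<and> Rem_p M X1 a \<and> val M a = val M b \<and> \<not> prec M b a \<and>
        prec M (gamma M a) b) \<or>
     (Cnt_p M X0 a \<and> Add_p M X0 b \<and> val M a = val M b \<and> \<not> prec M b a)"

definition prec' :: "'e sysexec \<Rightarrow> 'e \<Rightarrow> 'e \<Rightarrow> bool" where
  "prec' M a b \<longleftrightarrow> prec M a b \<or> arrow M a b"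

end

theory Submission
  imports Defs
begin

definition lexlt :: "'e sysexec \<Rightarrow> ('e \<times> nat) \<Rightarrow> ('e \<times> nat) \<Rightarrow> bool" where
  "lexlt M p q \<longleftrightarrow> prec M (fst p) (fst q) \<or> (fst p = fst q \<and> snd p < snd q)"

definition dn :: "'e sysexec \<Rightarrow> ('e \<times> nat) \<Rightarrow> ('e \<times> nat) set" where
  "dn M p = {q. lexlt M q p}"

definition tm :: "'e sysexec \<Rightarrow> 'e \<Rightarrow> ('e \<times> nat) set" where
  "tm M X = (if Cnt_p M X1 X then dn M (Begin M X, 0) \<union> dn M (gamma M X, 2)
     else if Cnt_p M X0 X then dn M (Begin M X, 0) \<union>
        (\<Union>R\<in>{R. Rem_p M X1 R \<and> val M R = val M X \<and> \<not> prec M X R \<and> prec M (gamma M R) X}.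
            dn M (R, 2))
     else dn M (Begin M X, 1))"

context
  fixes M :: "'e sysexec"
  assumes se: "system_execution M" and a0: "A0 M" and a1: "A1 M" and a2: "A2 M"
begin

lemma S: "(\<forall>x. \<not> prec M x x) \<and>
     (\<forall>x y z. prec M x y \<longrightarrow> prec M y z \<longrightarrow> prec M x z) \<and>
     (\<forall>x. finite {y. prec M y x}) \<and>
     (\<forall>x. \<exists>E. finite E \<and> (\<forall>y. y \<notin> E \<longrightarrow> prec M x y)) \<and>
     (\<forall>e. act M e \<longrightarrow> Begin M e = e \<and> End M e = e) \<and>
     (\<forall>X Y. prec M X Y \<longleftrightarrow> prec M (End M X) (Begin M Y))"
  using se unfolding system_execution_def by assumption
lemma irr: "\<not> prec M x x" using S[THEN conjunct1] by (rule spec)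
lemma trn: "prec M x y \<Longrightarrow> prec M y z \<Longrightarrow> prec M x z"
  using S[THEN conjunct2, THEN conjunct1] by blast
lemma actBE: "act M e \<Longrightarrow> Begin M e = e \<and> End M e = e"
  using S[THEN conjunct2, THEN conjunct2, THEN conjunct2, THEN conjunct2, THEN conjunct1] by blast
lemma precBE: "prec M X Y \<longleftrightarrow> prec M (End M X) (Begin M Y)"
  using S[THEN conjunct2, THEN conjunct2, THEN conjunct2, THEN conjunct2, THEN conjunct2] by blast
lemma lin: "act M a \<Longrightarrow> act M b \<Longrightarrow> a = b \<or> prec M a b \<or> prec M b a"
  using a0 unfolding A0_def by blast
lemma actB: "act M (Begin M X)" and actE: "act M (End M X)"
  using a0 unfolding A0_def by blast+
lemma addact: "Add M e \<Longrightarrow> act M e" and remact: "Rem M e \<Longrightarrow> act M e"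
  using a0 unfolding A0_def by blast+
lemma disj: "\<not> (Add M e \<and> Rem M e)" "\<not> (Add M e \<and> Cnt M e)" "\<not> (Rem M e \<and> Cnt M e)"
  using a0 unfolding A0_def by blast+

lemma lexlt_trans: "lexlt M p q \<Longrightarrow> lexlt M q r \<Longrightarrow> lexlt M p r"
  unfolding lexlt_def using trn by auto

lemma lexlt_irr: "\<not> lexlt M p p"
  unfolding lexlt_def using irr by auto

lemma dn_mono: "lexlt M p q \<or> p = q \<Longrightarrow> dn M p \<subseteq> dn M q"
  unfolding dn_def using lexlt_trans by blast

lemma dn_strict: "lexlt M p q \<Longrightarrow> p \<notin> dn M p \<and> p \<in> dn M q"
  unfolding dn_def using lexlt_irr by blast

lemma BleE: "Begin M X = End M X \<or> prec M (Begin M X) (End M X)"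
proof -
  have "\<not> prec M (End M X) (Begin M X)" using precBE irr by blast
  then show ?thesis using lin[OF actB actE] by blast
qed

lemma le_mono: "(a = b \<or> prec M a b) \<Longrightarrow> k \<le> l \<Longrightarrow> dn M (a,k) \<subseteq> dn M (b,l)"
  by (rule dn_mono) (auto simp: lexlt_def)

lemma bounds: "dn M (Begin M X, 0) \<subseteq> tm M X \<and> tm M X \<subseteq> dn M (End M X, 2)"
proof -
  have BE: "dn M (Begin M X, k) \<subseteq> dn M (End M X, 2)" if "k \<le> 2" for k
    using le_mono[OF BleE that] .
  show ?thesis
  proof (cases "Cnt_p M X1 X")
    case True
    have "prec M (gamma M X) (End M X)"
      using a1 True unfolding A1_def Op_p_def Cnt_p_def by blast
    then have "dn M (gamma M X, 2) \<subseteq> dn M (End M X, 2)" using le_mono by blast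
    then show ?thesis using True BE[of 0] unfolding tm_def by auto
  next
    case F: False
    show ?thesis
    proof (cases "Cnt_p M X0 X")
      case True
      have "dn M (R, 2) \<subseteq> dn M (End M X, 2)" if "Rem_p M X1 R" "\<not> prec M X R" for R
      proof -
        have "act M R" using that remact unfolding Rem_p_def by blast
        then have "\<not> prec M (End M X) R" using that precBE actBE by metis
        then have "R = End M X \<or> prec M R (End M X)" using lin[OF \<open>act M R\<close> actE] by blast
        then show ?thesis using le_mono by blast
      qed
      then show ?thesis using F True BE[of 0] unfolding tm_def by auto
    next
      case False
      then show ?thesis using F BE[of 1] le_mono[of "Begin M X" "Begin M X" 0 1]
        unfolding tm_def by auto
    qed
  qed
qed

lemma prec_step: "prec M X Y \<Longrightarrow> tm M X \<subset> tm M Y"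
proof -
  assume p: "prec M X Y"
  then have "prec M (End M X) (Begin M Y)" using precBE[of X Y] by simp
  then have "lexlt M (End M X, 2) (Begin M Y, 0)" by (simp add: lexlt_def)
  then have "dn M (End M X, 2) \<subset> dn M (Begin M Y, 0)"
    using dn_mono dn_strict by blast
  then show ?thesis using bounds[of X] bounds[of Y] by blast
qed

lemma tm_act: "\<not> Cnt M e \<Longrightarrow> act M e \<Longrightarrow> tm M e = dn M (e, 1)"
  unfolding tm_def Cnt_p_def using actBE by auto

lemma RA: assumes r: "Rem_p M X1 R" and a: "Add_p M X0 A" and v: "val M R = val M A"
    and g: "prec M (gamma M R) A" shows "prec M R A"
proof (rule ccontr)
  assume nra: "\<not> prec M R A"
  have actR: "act M R" using r remact unfolding Rem_p_def by blast
  have actA: "act M A" using a addact unfolding Add_p_def by blast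
  have "R \<noteq> A" using r a disj unfolding Rem_p_def Add_p_def by blast
  then have ar: "prec M A R" using lin[OF actR actA] nra by blast
  have opR: "Op_p M X1 R" using r unfolding Rem_p_def Op_p_def by blast
  have g0: "Add_p M X0 (gamma M R)" and gv: "val M (gamma M R) = val M R"
    and noR: "\<not> (\<exists>R'. Rem_p M X1 R' \<and> gamma M R' = gamma M R \<and>
                prec M (gamma M R) R' \<and> prec M R' R)"
    using a1 opR unfolding A1_def by blast+
  have opA: "Op_p M X0 A" using a unfolding Add_p_def Op_p_def by blast
  obtain R' where r': "Rem_p M X1 R'" "gamma M R = gamma M R'" "prec M R' (End M A)"
    using a2 opA g0 g gv v unfolding A2_def by metis
  have "prec M R' A" using r'(3) actBE[OF actA] by simp
  have opR': "Op_p M X1 R'" using r'(1) unfolding Rem_p_def Op_p_def by blast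
  have actR': "act M R'" using r'(1) remact unfolding Rem_p_def by blast
  have "prec M (gamma M R') R'" using a1 opR' actBE[OF actR'] unfolding A1_def by metis
  then show False using noR r' \<open>prec M R' A\<close> ar trn by metis
qed

lemma arrow_step: "arrow M X Y \<Longrightarrow> tm M X \<subset> tm M Y"
proof -
  assume "arrow M X Y"
  then consider (c1) "Cnt_p M X1 Y" "X = gamma M Y"
    | (c2) "Cnt_p M X1 X" "Rem_p M X1 Y" "gamma M Y = gamma M X"
    | (c3) "Cnt_p M X0 Y" "Rem_p M X1 X" "val M X = val M Y" "\<not> prec M Y X" "prec M (gamma M X) Y"
    | (c4) "Cnt_p M X0 X" "Add_p M X0 Y" "val M X = val M Y" "\<not> prec M Y X"
    unfolding arrow_def by blast
  then show ?thesis
  proof cases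
    case c1
    have "Op_p M X1 Y" using c1 unfolding Cnt_p_def Op_p_def by blast
    then have "Add_p M X0 X" using a1 c1 unfolding A1_def by blast
    then have "tm M X = dn M (X, 1)" using tm_act addact disj unfolding Add_p_def by blast
    moreover have "tm M Y = dn M (Begin M Y, 0) \<union> dn M (X, 2)" using c1 unfolding tm_def by simp
    moreover have "lexlt M (X,1) (X,2)" by (simp add: lexlt_def)
    ultimately show ?thesis using dn_mono dn_strict by blast
  next
    case c2
    define G where "G = gamma M X"
    have actY: "act M Y" using c2 remact unfolding Rem_p_def by blast
    have tY: "tm M Y = dn M (Y, 1)" using tm_act actY c2 disj unfolding Rem_p_def by blast
    have tX: "tm M X = dn M (Begin M X, 0) \<union> dn M (G, 2)" using c2 unfolding tm_def G_def by simp
    have "Op_p M X1 Y" using c2 unfolding Rem_p_def Op_p_def by blast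
    then have GY: "prec M G Y" using a1 c2 actBE[OF actY] unfolding A1_def G_def by metis
    have "Op_p M X1 X" using c2 unfolding Cnt_p_def Op_p_def by blast
    then have "\<not> prec M Y X" using a1 c2 GY unfolding A1_def G_def by metis
    then have nYB: "\<not> prec M Y (Begin M X)" using precBE[of Y X] actBE[OF actY] by simp
    then have BY: "Begin M X = Y \<or> prec M (Begin M X) Y" using lin[OF actY actB[of X]] by blast
    have s1: "dn M (Begin M X, 0) \<subseteq> dn M (Y, 1)" using le_mono[OF BY] by simp
    have s2: "dn M (G, 2) \<subseteq> dn M (Y, 1)" using GY by (intro dn_mono) (simp add: lexlt_def)
    have "(Y,0) \<in> dn M (Y,1)" by (simp add: dn_def lexlt_def)
    moreover have "(Y,0) \<notin> dn M (Begin M X, 0)" using nYB by (simp add: dn_def lexlt_def)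
    moreover have "(Y,0) \<notin> dn M (G, 2)" using GY irr trn by (auto simp add: dn_def lexlt_def)
    ultimately show ?thesis using tX tY s1 s2 by blast
  next
    case c3
    have actX: "act M X" using c3 remact unfolding Rem_p_def by blast
    have tX: "tm M X = dn M (X, 1)" using tm_act actX c3 disj unfolding Rem_p_def by blast
    have "Cnt_p M X0 Y" "\<not> Cnt_p M X1 Y" using c3 unfolding Cnt_p_def by auto
    then have "dn M (X, 2) \<subseteq> tm M Y" using c3 unfolding tm_def by auto
    moreover have "lexlt M (X,1) (X,2)" by (simp add: lexlt_def)
    ultimately show ?thesis using tX dn_mono dn_strict by blast
  next
    case c4
    have actY: "act M Y" using c4 addact unfolding Add_p_def by blast
    have tY: "tm M Y = dn M (Y, 1)" using tm_act actY c4 disj unfolding Add_p_def by blast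
    have nYB: "\<not> prec M Y (Begin M X)" using c4(4) precBE[of Y X] actBE[OF actY] by simp
    then have BY: "Begin M X = Y \<or> prec M (Begin M X) Y" using lin[OF actY actB[of X]] by blast
    have s1: "dn M (Begin M X, 0) \<subseteq> dn M (Y, 1)" using le_mono[OF BY] by simp
    have y0: "(Y,0) \<in> dn M (Y,1)" by (simp add: dn_def lexlt_def)
    have n1: "(Y,0) \<notin> dn M (Begin M X, 0)" using nYB by (simp add: dn_def lexlt_def)
    have RS: "dn M (R, 2) \<subseteq> dn M (Y, 1) \<and> (Y,0) \<notin> dn M (R,2)"
      if R: "Rem_p M X1 R" "val M R = val M X" "prec M (gamma M R) X" for R
    proof -
      have actG: "act M (gamma M R)"
        using a1 R(1) addact unfolding A1_def Op_p_def Rem_p_def Add_p_def by blast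
      have "prec M (gamma M R) (Begin M X)" using R(3) precBE[of "gamma M R" X] actBE[OF actG] by simp
      then have "prec M (gamma M R) Y" using BY trn by blast
      then have RY: "prec M R Y" using RA[OF R(1) c4(2)] R(2) c4(3) by simp
      then show ?thesis using irr trn
        by (auto simp add: dn_def lexlt_def intro: lexlt_trans)
    qed
    have tX: "tm M X = dn M (Begin M X, 0) \<union>
        (\<Union>R\<in>{R. Rem_p M X1 R \<and> val M R = val M X \<and> \<not> prec M X R \<and> prec M (gamma M R) X}.
            dn M (R, 2))" using c4 unfolding tm_def Cnt_p_def by auto
    show ?thesis unfolding tX tY using s1 y0 n1 RS by blast
  qed
qed

end

theorem theorem3p8:
  fixes M :: "'e sysexec"
  assumes "system_execution M" and "A0 M" and "A1 M" and "A2 M"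
  shows "\<not> (\<exists>n::nat. \<exists>X::nat \<Rightarrow> 'e. n \<ge> 1 \<and> X 0 = X n \<and>
              (\<forall>i<n. prec' M (X i) (X (Suc i))))"
proof
  assume "\<exists>n::nat. \<exists>X::nat \<Rightarrow> 'e. n \<ge> 1 \<and> X 0 = X n \<and> (\<forall>i<n. prec' M (X i) (X (Suc i)))"
  then obtain n X where n: "n \<ge> 1" "X 0 = X n" and st: "\<forall>i<n. prec' M (X i) (X (Suc i))"
    by blast
  have step: "tm M (X i) \<subset> tm M (X (Suc i))" if "i < n" for i
  proof -
    have "prec' M (X i) (X (Suc i))" using st that by blast
    then have "prec M (X i) (X (Suc i)) \<or> arrow M (X i) (X (Suc i))" unfolding prec'_def .
    then show ?thesis
    proof
      assume "prec M (X i) (X (Suc i))"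
      then show ?thesis by (rule prec_step[OF assms])
    next
      assume "arrow M (X i) (X (Suc i))"
      then show ?thesis by (rule arrow_step[OF assms])
    qed
  qed
  have ch: "tm M (X 0) \<subset> tm M (X (Suc k))" if "Suc k \<le> n" for k
    using that
  proof (induction k)
    case 0 then show ?case using step[of 0] by simp
  next
    case (Suc k)
    then have "tm M (X 0) \<subset> tm M (X (Suc k))" by simp
    moreover have "tm M (X (Suc k)) \<subset> tm M (X (Suc (Suc k)))" using step[of "Suc k"] Suc.prems by simp
    ultimately show ?case by (rule psubset_trans)
  qed
  obtain m where m: "n = Suc m" using n(1) by (cases n) auto
  have "tm M (X 0) \<subset> tm M (X n)" using ch[of m] m by simp
  then show False using n(2) by simp
qed

end
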